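(* Let $\sigma_X^2>0$, $\sigma_{N_1}^2,\dots,\sigma_{N_K}^2>0$, $D>0$, let $(r_1,\dots,r_K)\in\mathcal{F}(D)$, and let $\alpha_1\ge\alpha_2\ge\dots\ge\alpha_K\ge0$. Define, for $k=1,\dots,K$, $$R_k^\ast=r_k+\frac12\log\Big(\frac1{\sigma_X^2}+\sum_{i=k}^K\frac{1-e^{-2r_i}}{\sigma_{N_i}^2}\Big)-\frac12\log\Big(\frac1{\sigma_X^2}+\sum_{i=k+1}^K\frac{1-e^{-2r_i}}{\sigma_{N_i}^2}\Big)$$ (an empty sum being $0$). Then $(R_1^\ast,\dots,R_K^\ast)\in\mathcal{R}(r_1,\dots,r_K)$ and $\sum_{k=1}^K\alpha_kR_k^\ast\le\sum_{k=1}^K\alpha_kR_k'$ for every $(R_1',\dots,R_K')\in\mathcal{R}(r_1,\dots,r_K)$.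
   Context: Logarithms are natural. $\mathcal{K}=\{1,\dots,K\}$, $\mathcal{A}^c=\mathcal{K}\setminus\mathcal{A}$. $\mathcal{F}(D)=\{(r_1,\dots,r_K)\in\mathbb{R}_+^K:\ \sum_{k=1}^K\frac{1-e^{-2r_k}}{\sigma_{N_k}^2}=\frac1D\}$. For $(r_1,\dots,r_K)\in\mathbb{R}_+^K$, $\mathcal{R}(r_1,\dots,r_K)$ is the set of all $(R_1,\dots,R_K)$ such that for every $\mathcal{A}\subseteq\mathcal{K}$: $\sum_{k\in\mathcal{A}}R_k\ge\sum_{k\in\mathcal{A}}r_k+\frac12\log(\frac1{\sigma_X^2}+\frac1D)-\frac12\log(\frac1{\sigma_X^2}+\sum_{k\in\mathcal{A}^c}\frac{1-e^{-2r_k}}{\sigma_{N_k}^2})$. *)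

theory Defs
  imports Complex_Main
begin

text \<open>Indices k range over {1..K}; tuples are functions nat => real, only values on {1..K} matter.
  sX2 = sigma_X^2, sN2 k = sigma_{N_k}^2.\<close>

definition Fset :: "nat \<Rightarrow> real \<Rightarrow> (nat \<Rightarrow> real) \<Rightarrow> real \<Rightarrow> (nat \<Rightarrow> real) set" where
  "Fset K sX2 sN2 D = {r. (\<forall>k\<in>{1..K}. r k \<ge> 0) \<and>
      (\<Sum>k=1..K. (1 - exp (-2 * r k)) / sN2 k) = 1 / D}"

definition Rset :: "nat \<Rightarrow> real \<Rightarrow> (nat \<Rightarrow> real) \<Rightarrow> real \<Rightarrow> (nat \<Rightarrow> real) \<Rightarrow> (nat \<Rightarrow> real) set" where
  "Rset K sX2 sN2 D r = {R. \<forall>A. A \<subseteq> {1..K} \<longrightarrow>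
      (\<Sum>k\<in>A. R k) \<ge> (\<Sum>k\<in>A. r k) + 1/2 * ln (1 / sX2 + 1 / D)
         - 1/2 * ln (1 / sX2 + (\<Sum>k\<in>{1..K} - A. (1 - exp (-2 * r k)) / sN2 k))}"

definition Rstar :: "nat \<Rightarrow> real \<Rightarrow> (nat \<Rightarrow> real) \<Rightarrow> (nat \<Rightarrow> real) \<Rightarrow> nat \<Rightarrow> real" where
  "Rstar K sX2 sN2 r k = r k
      + 1/2 * ln (1 / sX2 + (\<Sum>i=k..K. (1 - exp (-2 * r i)) / sN2 i))
      - 1/2 * ln (1 / sX2 + (\<Sum>i=k+1..K. (1 - exp (-2 * r i)) / sN2 i))"

end

theory Submission
  imports Defs
begin

lemma key_ln:
  fixes c a T V :: real
  assumes "c > 0" "a \<ge> 0" "T \<ge> 0" "T \<le> V"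
  shows "ln (c + a + V) - ln (c + V) \<le> ln (c + a + T) - ln (c + T)"
proof -
  have p: "c + a + V > 0" "c + V > 0" "c + a + T > 0" "c + T > 0" using assms by linarith+
  have "(c + a + V) * (c + T) \<le> (c + a + T) * (c + V)"
  proof -
    have "(c + a + T) * (c + V) - (c + a + V) * (c + T) = a * (V - T)" by (simp add: algebra_simps)
    moreover have "a * (V - T) \<ge> 0" using assms by simp
    ultimately show ?thesis by linarith
  qed
  hence "ln ((c + a + V) * (c + T)) \<le> ln ((c + a + T) * (c + V))"
    using p by (simp add: mult_pos_pos)
  hence "ln (c + a + V) + ln (c + T) \<le> ln (c + a + T) + ln (c + V)"
    using p by (simp add: ln_mult)
  thus ?thesis by linarith
qed

lemma abel:
  fixes \<alpha> d :: "nat \<Rightarrow> real"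
  assumes "\<forall>k\<in>{1..n}. \<forall>l\<in>{1..n}. k \<le> l \<longrightarrow> \<alpha> l \<le> \<alpha> k"
    "\<forall>k\<in>{1..n}. (\<Sum>j=1..k. d j) \<ge> 0"
  shows "(\<Sum>k=1..n. \<alpha> k * d k) \<ge> \<alpha> n * (\<Sum>j=1..n. d j)"
  using assms
proof (induction n)
  case 0 then show ?case by simp
next
  case (Suc n)
  have IH: "(\<Sum>k=1..n. \<alpha> k * d k) \<ge> \<alpha> n * (\<Sum>j=1..n. d j)" using Suc by auto
  show ?case
  proof (cases "n = 0")
    case True then show ?thesis by simp
  next
    case False
    have "\<alpha> (Suc n) \<le> \<alpha> n" using Suc.prems(1) False by auto
    moreover have "(\<Sum>j=1..n. d j) \<ge> 0" using Suc.prems(2) False by auto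
    ultimately have "\<alpha> (Suc n) * (\<Sum>j=1..n. d j) \<le> \<alpha> n * (\<Sum>j=1..n. d j)"
      by (simp add: mult_right_mono)
    then show ?thesis using IH by (simp add: distrib_left)
  qed
qed

lemma feas:
  fixes a x r :: "nat \<Rightarrow> real" and c :: real
  assumes c: "c > 0" and a: "\<forall>i\<in>{1..K}. a i \<ge> 0"
    and x: "\<forall>k. x k = r k + 1/2 * ln (c + (\<Sum>i=k..K. a i)) - 1/2 * ln (c + (\<Sum>i=k+1..K. a i))"
  shows "m \<le> K \<Longrightarrow> A \<subseteq> {1..m} \<Longrightarrow> (\<Sum>k\<in>A. x k) \<ge> (\<Sum>k\<in>A. r k)
     + 1/2 * ln (c + (\<Sum>i=1..K. a i)) - 1/2 * ln (c + (\<Sum>i\<in>{1..K}-A. a i))"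
proof (induction m arbitrary: A)
  case 0 then show ?case by simp
next
  case (Suc m)
  show ?case
  proof (cases "Suc m \<in> A")
    case False
    hence "A \<subseteq> {1..m}" using Suc.prems by (auto simp: le_Suc_eq)
    then show ?thesis using Suc by auto
  next
    case True
    define A' where "A' = A - {Suc m}"
    have A'sub: "A' \<subseteq> {1..m}" using Suc.prems by (auto simp: A'_def le_Suc_eq)
    have IH: "(\<Sum>k\<in>A'. x k) \<ge> (\<Sum>k\<in>A'. r k)
     + 1/2 * ln (c + (\<Sum>i=1..K. a i)) - 1/2 * ln (c + (\<Sum>i\<in>{1..K}-A'. a i))"
      using Suc.IH[OF _ A'sub] Suc.prems by simp
    have finA': "finite A'" using A'sub finite_subset by blast
    have Aeq: "A = insert (Suc m) A'" "Suc m \<notin> A'" using True by (auto simp: A'_def)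
    have sumA: "(\<Sum>k\<in>A. f k) = (\<Sum>k\<in>A'. f k) + f (Suc m)" for f :: "nat \<Rightarrow> real"
      using Aeq finA' by simp
    define V where "V = {1..K} - A"
    have V1: "{1..K} - A' = insert (Suc m) V" "Suc m \<notin> V"
      using Suc.prems Aeq by (auto simp: V_def)
    have finV: "finite V" by (simp add: V_def)
    have SV1: "(\<Sum>i\<in>{1..K}-A'. a i) = a (Suc m) + (\<Sum>i\<in>V. a i)"
      using V1 finV by simp
    have Vsup: "{Suc m + 1..K} \<subseteq> V" using Suc.prems by (auto simp: V_def)
    have "(\<Sum>i\<in>V. a i) \<ge> (\<Sum>i=Suc m + 1..K. a i)"
      by (rule sum_mono2[OF finV Vsup]) (use a in \<open>auto simp: V_def\<close>)
    moreover have T0: "(\<Sum>i=Suc m + 1..K. a i) \<ge> 0" using a by (intro sum_nonneg) auto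
    moreover have am: "a (Suc m) \<ge> 0" using a Suc.prems by auto
    ultimately have kk: "ln (c + a (Suc m) + (\<Sum>i\<in>V. a i)) - ln (c + (\<Sum>i\<in>V. a i))
        \<le> ln (c + a (Suc m) + (\<Sum>i=Suc m + 1..K. a i)) - ln (c + (\<Sum>i=Suc m + 1..K. a i))"
      using key_ln c by blast
    have split: "(\<Sum>i=Suc m..K. a i) = a (Suc m) + (\<Sum>i=Suc m + 1..K. a i)"
      using Suc.prems by (simp add: sum.atLeast_Suc_atMost)
    have xm: "x (Suc m) = r (Suc m) + 1/2 * ln (c + a (Suc m) + (\<Sum>i=Suc m + 1..K. a i))
       - 1/2 * ln (c + (\<Sum>i=Suc m + 1..K. a i))"
      using x split by (simp add: add.assoc)
    have "{1..K} - A = V" by (simp add: V_def)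
    then show ?thesis using IH kk xm SV1 sumA[of x] sumA[of r]
      by (simp add: add.assoc)
  qed
qed

lemma prefix:
  fixes a x r :: "nat \<Rightarrow> real" and c :: real
  assumes x: "\<forall>k. x k = r k + 1/2 * ln (c + (\<Sum>i=k..K. a i)) - 1/2 * ln (c + (\<Sum>i=k+1..K. a i))"
  shows "k \<le> K \<Longrightarrow> (\<Sum>j=1..k. x j) = (\<Sum>j=1..k. r j) + 1/2 * ln (c + (\<Sum>i=1..K. a i))
     - 1/2 * ln (c + (\<Sum>i=k+1..K. a i))"
proof (induction k)
  case 0 then show ?case by simp
next
  case (Suc k)
  then show ?case using x by simp
qed

theorem lemma1:
  fixes K :: nat and sX2 D :: real and sN2 r \<alpha> :: "nat \<Rightarrow> real"
  assumes "sX2 > 0"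
    and "\<forall>k\<in>{1..K}. sN2 k > 0"
    and "D > 0"
    and "r \<in> Fset K sX2 sN2 D"
    and "\<forall>k\<in>{1..K}. \<forall>l\<in>{1..K}. k \<le> l \<longrightarrow> \<alpha> l \<le> \<alpha> k"
    and "\<forall>k\<in>{1..K}. \<alpha> k \<ge> 0"
  shows "Rstar K sX2 sN2 r \<in> Rset K sX2 sN2 D r \<and>
    (\<forall>R' \<in> Rset K sX2 sN2 D r.
       (\<Sum>k=1..K. \<alpha> k * Rstar K sX2 sN2 r k) \<le> (\<Sum>k=1..K. \<alpha> k * R' k))"
proof -
  define a where "a = (\<lambda>i. (1 - exp (-2 * r i)) / sN2 i)"
  define c where "c = 1 / sX2"
  have c: "c > 0" using assms(1) by (simp add: c_def)
  have a: "\<forall>i\<in>{1..K}. a i \<ge> 0"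
  proof
    fix i assume i: "i \<in> {1..K}"
    have "r i \<ge> 0" using assms(4) i by (simp add: Fset_def)
    hence "exp (-2 * r i) \<le> 1" by simp
    moreover have "sN2 i > 0" using assms(2) i by blast
    ultimately show "a i \<ge> 0" unfolding a_def by (intro divide_nonneg_pos) auto
  qed
  have SK: "(\<Sum>i=1..K. a i) = 1 / D" using assms(4) by (simp add: Fset_def a_def)
  define x where "x = Rstar K sX2 sN2 r"
  have x: "\<forall>k. x k = r k + 1/2 * ln (c + (\<Sum>i=k..K. a i)) - 1/2 * ln (c + (\<Sum>i=k+1..K. a i))"
    by (simp add: x_def Rstar_def a_def c_def)
  have part1: "x \<in> Rset K sX2 sN2 D r"
    unfolding Rset_def
  proof (intro CollectI allI impI)
    fix A assume "A \<subseteq> {1..K}"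
    from feas[OF c a x order.refl this] SK show
      "(\<Sum>k\<in>A. r k) + 1/2 * ln (1 / sX2 + 1 / D)
         - 1/2 * ln (1 / sX2 + (\<Sum>k\<in>{1..K} - A. (1 - exp (-2 * r k)) / sN2 k)) \<le> (\<Sum>k\<in>A. x k)"
      by (simp add: a_def c_def)
  qed
  have part2: "(\<Sum>k=1..K. \<alpha> k * x k) \<le> (\<Sum>k=1..K. \<alpha> k * R' k)" if R': "R' \<in> Rset K sX2 sN2 D r" for R'
  proof -
    define d where "d = (\<lambda>k. R' k - x k)"
    have P: "\<forall>k\<in>{1..K}. (\<Sum>j=1..k. d j) \<ge> 0"
    proof
      fix k assume k: "k \<in> {1..K}"
      have sub: "{1..k} \<subseteq> {1..K}" using k by auto
      have diff: "{1..K} - {1..k} = {k+1..K}" by auto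
      have "(\<Sum>j=1..k. R' j) \<ge> (\<Sum>j=1..k. r j) + 1/2 * ln (c + 1 / D)
         - 1/2 * ln (c + (\<Sum>i=k+1..K. a i))"
      proof -
        have "\<forall>A. A \<subseteq> {1..K} \<longrightarrow>
      (\<Sum>k\<in>A. R' k) \<ge> (\<Sum>k\<in>A. r k) + 1/2 * ln (1 / sX2 + 1 / D)
         - 1/2 * ln (1 / sX2 + (\<Sum>k\<in>{1..K} - A. (1 - exp (-2 * r k)) / sN2 k))"
          using R' unfolding Rset_def by blast
        from this[rule_format, OF sub] show ?thesis unfolding diff a_def c_def .
      qed
      moreover have "(\<Sum>j=1..k. x j) = (\<Sum>j=1..k. r j) + 1/2 * ln (c + 1 / D)
         - 1/2 * ln (c + (\<Sum>i=k+1..K. a i))"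
        using prefix[OF x, of k] k SK by simp
      ultimately show "(\<Sum>j=1..k. d j) \<ge> 0" by (simp add: d_def sum_subtractf)
    qed
    have "(\<Sum>k=1..K. \<alpha> k * d k) \<ge> \<alpha> K * (\<Sum>j=1..K. d j)"
      using abel[OF assms(5) P] .
    moreover have "\<alpha> K * (\<Sum>j=1..K. d j) \<ge> 0"
    proof (cases "K = 0")
      case True then show ?thesis by simp
    next
      case False
      then show ?thesis using assms(6) P by (intro mult_nonneg_nonneg) auto
    qed
    ultimately have "(\<Sum>k=1..K. \<alpha> k * d k) \<ge> 0" by linarith
    thus ?thesis by (simp add: d_def right_diff_distrib sum_subtractf)
  qed
  show ?thesis using part1 part2 by (simp add: x_def)
qed

end
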